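(* Let $F:\mathsf V\to\mathsf W$ be a morphism of quantales and $X=(X,a)$ a $\mathsf V$-category; let $FX=(X,F\circ a)$. Let $\Phi$ be the map from the set of left adjoint $\mathsf V$-modules $E\rightharpoonup X$ to the set of left adjoint $\mathsf W$-modules $E\rightharpoonup FX$ given by $\Phi(\varphi)=F\circ\varphi$. (1) If $FX$ is Cauchy complete and $\Phi$ is injective, then $X$ is Cauchy complete. (2) If $X$ is Cauchy complete and $\Phi$ is surjective, then $FX$ is Cauchy complete.
   Context: A quantale $(\mathsf V,\otimes,k)$ is a complete anti-symmetric lattice with an associative, commutative operation $\otimes$ with neutral element $k$ distributing over arbitrary suprema. A morphism of quantales $F:(\mathsf V,\otimes,k)\to(\mathsf W,\oplus,l)$ is a monotone map preserving all suprema, with $F(u)\oplus F(v)=F(u\otimes v)$ and $F(k)=l$. A $\mathsf V$-category $(X,a)$ is a set with $a:X\times X\to\mathsf V$ such that $k\le a(x,x)$ and $a(x,y)\otimes a(y,z)\le a(x,z)$. A $\mathsf V$-module $\varphi:(X,a)\rightharpoonup(Y,b)$ is a map $X\times Y\to\mathsf V$ with $a(x,x')\otimes\varphi(x',y)\le\varphi(x,y)$ and $\varphi(x,y)\otimes b(y,y')\le\varphi(x,y')$; composition $(\psi\cdot\varphi)(x,z)=\bigvee_y\varphi(x,y)\otimes\psi(y,z)$; pointwise order; $\varphi\dashv\psi$ means $a\le\psi\cdot\varphi$ and $\varphi\cdot\psi\le b$; $\varphi$ is left adjoint if such $\psi$ exists. $E=(\{\star\},k)$ (for $\mathsf W$,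 $(\{\star\},l)$, which equals $FE$). For $x\in X$, $x_*:E\rightharpoonup X$ is $y\mapsto a(x,y)$. $X$ is Cauchy complete if every left adjoint module $E\rightharpoonup X$ equals $x_*$ for some $x\in X$. $F$ applied to a module is post-composition with $F$; it preserves adjunctions. *)

theory Defs
  imports Main
begin

definition quantale :: "('v::complete_lattice \<Rightarrow> 'v \<Rightarrow> 'v) \<Rightarrow> 'v \<Rightarrow> bool" where
  "quantale tens k \<longleftrightarrow>
     (\<forall>u v w. tens (tens u v) w = tens u (tens v w)) \<and>
     (\<forall>u v. tens u v = tens v u) \<and>
     (\<forall>u. tens k u = u \<and> tens u k = u) \<and>
     (\<forall>u A. tens u (Sup A) = Sup (tens u ` A) \<and> tens (Sup A) u = Sup ((\<lambda>v. tens v u) ` A))"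

definition quantale_morphism ::
  "('v::complete_lattice \<Rightarrow> 'v \<Rightarrow> 'v) \<Rightarrow> 'v \<Rightarrow> ('w::complete_lattice \<Rightarrow> 'w \<Rightarrow> 'w) \<Rightarrow> 'w
    \<Rightarrow> ('v \<Rightarrow> 'w) \<Rightarrow> bool" where
  "quantale_morphism tens k tens' l F \<longleftrightarrow>
     quantale tens k \<and> quantale tens' l \<and> mono F \<and>
     (\<forall>A. F (Sup A) = Sup (F ` A)) \<and>
     (\<forall>u v. tens' (F u) (F v) = F (tens u v)) \<and> F k = l"

definition vcat :: "('v::complete_lattice \<Rightarrow> 'v \<Rightarrow> 'v) \<Rightarrow> 'v \<Rightarrow> ('x \<Rightarrow> 'x \<Rightarrow> 'v) \<Rightarrow> bool" where
  "vcat tens k a \<longleftrightarrow> (\<forall>x. k \<le> a x x) \<and> (\<forall>x y z. tens (a x y) (a y z) \<le> a x z)"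

definition vmodule :: "('v::complete_lattice \<Rightarrow> 'v \<Rightarrow> 'v) \<Rightarrow> ('x \<Rightarrow> 'x \<Rightarrow> 'v) \<Rightarrow> ('y \<Rightarrow> 'y \<Rightarrow> 'v)
    \<Rightarrow> ('x \<Rightarrow> 'y \<Rightarrow> 'v) \<Rightarrow> bool" where
  "vmodule tens a b phi \<longleftrightarrow>
     (\<forall>x x' y. tens (a x x') (phi x' y) \<le> phi x y) \<and>
     (\<forall>x y y'. tens (phi x y) (b y y') \<le> phi x y')"

definition mcomp :: "('v::complete_lattice \<Rightarrow> 'v \<Rightarrow> 'v) \<Rightarrow> ('y \<Rightarrow> 'z \<Rightarrow> 'v) \<Rightarrow> ('x \<Rightarrow> 'y \<Rightarrow> 'v)
    \<Rightarrow> ('x \<Rightarrow> 'z \<Rightarrow> 'v)" where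
  "mcomp tens psi phi = (\<lambda>x z. SUP y. tens (phi x y) (psi y z))"

definition madjoint :: "('v::complete_lattice \<Rightarrow> 'v \<Rightarrow> 'v) \<Rightarrow> ('x \<Rightarrow> 'x \<Rightarrow> 'v) \<Rightarrow> ('y \<Rightarrow> 'y \<Rightarrow> 'v)
    \<Rightarrow> ('x \<Rightarrow> 'y \<Rightarrow> 'v) \<Rightarrow> ('y \<Rightarrow> 'x \<Rightarrow> 'v) \<Rightarrow> bool" where
  "madjoint tens a b phi psi \<longleftrightarrow>
     vmodule tens a b phi \<and> vmodule tens b a psi \<and>
     a \<le> mcomp tens psi phi \<and> mcomp tens phi psi \<le> b"

definition left_adjoint :: "('v::complete_lattice \<Rightarrow> 'v \<Rightarrow> 'v) \<Rightarrow> ('x \<Rightarrow> 'x \<Rightarrow> 'v) \<Rightarrow> ('y \<Rightarrow> 'y \<Rightarrow> 'v)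
    \<Rightarrow> ('x \<Rightarrow> 'y \<Rightarrow> 'v) \<Rightarrow> bool" where
  "left_adjoint tens a b phi \<longleftrightarrow> vmodule tens a b phi \<and> (\<exists>psi. madjoint tens a b phi psi)"

definition unitcat :: "'v \<Rightarrow> unit \<Rightarrow> unit \<Rightarrow> 'v" where
  "unitcat k = (\<lambda>_ _. k)"

definition LA :: "('v::complete_lattice \<Rightarrow> 'v \<Rightarrow> 'v) \<Rightarrow> 'v \<Rightarrow> ('x \<Rightarrow> 'x \<Rightarrow> 'v)
    \<Rightarrow> (unit \<Rightarrow> 'x \<Rightarrow> 'v) set" where
  "LA tens k a = {phi. left_adjoint tens (unitcat k) a phi}"

definition lowerstar :: "('x \<Rightarrow> 'x \<Rightarrow> 'v) \<Rightarrow> 'x \<Rightarrow> unit \<Rightarrow> 'x \<Rightarrow> 'v" where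
  "lowerstar a x = (\<lambda>_ y. a x y)"

definition cauchy_complete :: "('v::complete_lattice \<Rightarrow> 'v \<Rightarrow> 'v) \<Rightarrow> 'v \<Rightarrow> ('x \<Rightarrow> 'x \<Rightarrow> 'v) \<Rightarrow> bool" where
  "cauchy_complete tens k a \<longleftrightarrow> (\<forall>phi \<in> LA tens k a. \<exists>x. phi = lowerstar a x)"

definition Fmod :: "('v \<Rightarrow> 'w) \<Rightarrow> ('x \<Rightarrow> 'y \<Rightarrow> 'v) \<Rightarrow> ('x \<Rightarrow> 'y \<Rightarrow> 'w)" where
  "Fmod F phi = (\<lambda>x y. F (phi x y))"

end

theory Submission
  imports Defs
begin

lemma tens_mono_l:
  assumes q: "quantale tens k" and "u \<le> u'"
  shows "tens u v \<le> tens u' v"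
proof -
  have "tens (Sup {u,u'}) v = Sup ((\<lambda>w. tens w v) ` {u,u'})" using q unfolding quantale_def by blast
  moreover have "Sup {u,u'} = u'" using assms(2) by (simp add: sup_absorb2)
  ultimately have "tens u' v = sup (tens u v) (tens u' v)" by simp
  thus ?thesis by (metis sup.cobounded1)
qed

lemma tens_mono:
  assumes q: "quantale tens k" and "u \<le> u'" "v \<le> v'"
  shows "tens u v \<le> tens u' v'"
proof -
  have c: "\<And>x y. tens x y = tens y x" using q unfolding quantale_def by blast
  have "tens u v \<le> tens u' v" by (rule tens_mono_l[OF q assms(2)])
  also have "\<dots> = tens v u'" by (rule c)
  also have "\<dots> \<le> tens v' u'" by (rule tens_mono_l[OF q assms(3)])
  also have "\<dots> = tens u' v'" by (rule c)
  finally show ?thesis .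
qed

lemma lowerstar_LA:
  assumes q: "quantale tens k" and v: "vcat tens k a"
  shows "lowerstar a x \<in> LA tens k a"
proof -
  have unit: "\<And>u. tens k u = u" "\<And>u. tens u k = u" using q unfolding quantale_def by auto
  have refl: "\<And>x. k \<le> a x x" and tr: "\<And>x y z. tens (a x y) (a y z) \<le> a x z"
    using v unfolding vcat_def by auto
  define psi where "psi = (\<lambda>y (_::unit). a y x)"
  have m1: "vmodule tens (unitcat k) a (lowerstar a x)"
    unfolding vmodule_def unitcat_def lowerstar_def using unit tr by auto
  have m2: "vmodule tens a (unitcat k) psi"
    unfolding vmodule_def unitcat_def psi_def using unit tr by auto
  have c1: "unitcat k \<le> mcomp tens psi (lowerstar a x)"
  proof (rule le_funI, rule le_funI)
    fix s t :: unit
    have "k = tens k k" using unit by simp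
    also have "\<dots> \<le> tens (a x x) (a x x)" by (rule tens_mono[OF q refl refl])
    also have "\<dots> \<le> (SUP y. tens (a x y) (a y x))" by (rule SUP_upper) simp
    finally show "unitcat k s t \<le> mcomp tens psi (lowerstar a x) s t"
      unfolding unitcat_def mcomp_def psi_def lowerstar_def by simp
  qed
  have c2: "mcomp tens (lowerstar a x) psi \<le> a"
  proof (rule le_funI, rule le_funI)
    fix y y'
    show "mcomp tens (lowerstar a x) psi y y' \<le> a y y'"
      unfolding mcomp_def psi_def lowerstar_def by (rule SUP_least) (rule tr)
  qed
  show ?thesis unfolding LA_def left_adjoint_def madjoint_def using m1 m2 c1 c2 by blast
qed

lemma Fmod_LA:
  assumes F: "quantale_morphism tensV k tensW l F" and phi: "phi \<in> LA tensV k a"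
  shows "Fmod F phi \<in> LA tensW l (Fmod F a)"
proof -
  have mono: "mono F" and FS: "\<And>A. F (Sup A) = Sup (F ` A)"
    and Ft: "\<And>u v. tensW (F u) (F v) = F (tensV u v)" and Fk: "F k = l"
    using F unfolding quantale_morphism_def by auto
  have FSUP: "\<And>f. F (SUP y. f y) = (SUP y. F (f y))" using FS by (simp add: image_image)
  have Fmodule: "vmodule tensW (Fmod F b) (Fmod F c) (Fmod F p)" if "vmodule tensV b c p"
    for b :: "'p \<Rightarrow> 'p \<Rightarrow> _" and c :: "'q \<Rightarrow> 'q \<Rightarrow> _" and p
    using that unfolding vmodule_def Fmod_def by (auto simp: Ft intro: monoD[OF mono])
  obtain psi where adj: "madjoint tensV (unitcat k) a phi psi"
    using phi unfolding LA_def left_adjoint_def by blast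
  have FE: "Fmod F (unitcat k) = unitcat l" unfolding Fmod_def unitcat_def Fk ..
  have m1: "vmodule tensW (unitcat l) (Fmod F a) (Fmod F phi)"
    using Fmodule[of "unitcat k" a phi] adj FE unfolding madjoint_def by simp
  have m2: "vmodule tensW (Fmod F a) (unitcat l) (Fmod F psi)"
    using Fmodule[of a "unitcat k" psi] adj FE unfolding madjoint_def by simp
  have comp: "mcomp tensW (Fmod F q) (Fmod F p) = Fmod F (mcomp tensV q p)"
    for p :: "'r \<Rightarrow> 's \<Rightarrow> _" and q :: "'s \<Rightarrow> 't \<Rightarrow> _"
    unfolding mcomp_def Fmod_def by (simp add: Ft FSUP)
  have Fle: "Fmod F f \<le> Fmod F g" if "f \<le> g" for f g :: "'r \<Rightarrow> 's \<Rightarrow> _"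
    using that unfolding Fmod_def le_fun_def by (auto intro: monoD[OF mono])
  have c1: "unitcat l \<le> mcomp tensW (Fmod F psi) (Fmod F phi)"
    using Fle[of "unitcat k" "mcomp tensV psi phi"] adj FE unfolding madjoint_def comp by simp
  have c2: "mcomp tensW (Fmod F phi) (Fmod F psi) \<le> Fmod F a"
    using Fle[of "mcomp tensV phi psi" a] adj unfolding madjoint_def comp by simp
  show ?thesis unfolding LA_def left_adjoint_def madjoint_def using m1 m2 c1 c2 by blast
qed

lemma Fmod_lowerstar: "Fmod F (lowerstar a x) = lowerstar (Fmod F a) x"
  unfolding Fmod_def lowerstar_def by simp

theorem proposition3p2:
  fixes tensV :: "'v::complete_lattice \<Rightarrow> 'v \<Rightarrow> 'v" and k :: 'v
    and tensW :: "'w::complete_lattice \<Rightarrow> 'w \<Rightarrow> 'w" and l :: 'w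
    and F :: "'v \<Rightarrow> 'w" and a :: "'x \<Rightarrow> 'x \<Rightarrow> 'v"
  assumes "quantale_morphism tensV k tensW l F"
    and "vcat tensV k a"
  shows "(cauchy_complete tensW l (Fmod F a) \<and> inj_on (Fmod F) (LA tensV k a)
            \<longrightarrow> cauchy_complete tensV k a)
       \<and> (cauchy_complete tensV k a \<and> Fmod F ` LA tensV k a = LA tensW l (Fmod F a)
            \<longrightarrow> cauchy_complete tensW l (Fmod F a))"
proof (intro conjI impI)
  have q: "quantale tensV k" using assms(1) unfolding quantale_morphism_def by blast
  assume h: "cauchy_complete tensW l (Fmod F a) \<and> inj_on (Fmod F) (LA tensV k a)"
  show "cauchy_complete tensV k a"
    unfolding cauchy_complete_def
  proof
    fix phi assume p: "phi \<in> LA tensV k a"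
    obtain x where "Fmod F phi = lowerstar (Fmod F a) x"
      using h Fmod_LA[OF assms(1) p] unfolding cauchy_complete_def by blast
    hence "Fmod F phi = Fmod F (lowerstar a x)" by (simp add: Fmod_lowerstar)
    hence "phi = lowerstar a x"
      using h p lowerstar_LA[OF q assms(2)] by (meson inj_onD)
    thus "\<exists>x. phi = lowerstar a x" ..
  qed
next
  assume h: "cauchy_complete tensV k a \<and> Fmod F ` LA tensV k a = LA tensW l (Fmod F a)"
  show "cauchy_complete tensW l (Fmod F a)"
    unfolding cauchy_complete_def
  proof
    fix psi assume "psi \<in> LA tensW l (Fmod F a)"
    then obtain phi where p: "phi \<in> LA tensV k a" and "psi = Fmod F phi" using h by blast
    moreover obtain x where "phi = lowerstar a x" using h p unfolding cauchy_complete_def by blast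
    ultimately show "\<exists>x. psi = lowerstar (Fmod F a) x" by (auto simp: Fmod_lowerstar)
  qed
qed

end
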